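(* Let $p\in\mathbb{C}\setminus\{0\}$. The assignment $$\Delta(H)=H\otimes\mathbb{I}+\mathbb{I}\otimes H,\quad \Delta(E)=E\otimes\mathbb{I}+\mathbb{I}\otimes E,\quad \Delta(F)=p\,F\otimes\mathbb{I}+(1-p)\,\mathbb{I}\otimes F$$ extends to an algebra homomorphism from the oscillator algebra $osc$ to $osc\otimes osc$. Moreover, for all $\lambda_1,\lambda_2\in\mathbb{C}$ and all integers $0\le k\le N$, the vectors $w_{k,N}=\sum_{n=0}^N K_n(k,N)\,|\lambda_1,n\rangle\otimes|\lambda_2,N-n\rangle$ in $V_{\lambda_1}\otimes V_{\lambda_2}$ satisfy $\Delta(H)w_{k,N}=(\lambda_1+\lambda_2+2N)w_{k,N}$, $\Delta(E)w_{k,N}=w_{k,N+1}$ and $\Delta(F)w_{k,N}=-(N-k)\,w_{k,N-1}$ (with $w_{k,k-1}=0$); i.e. the $K_n(k,N)$ are the Clebsch–Gordan coefficients for this coproduct.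
   Context: The oscillator algebra $osc$ is generated by $H,E,F$ with relations $[H,E]=2E$, $[H,F]=-2F$, $[E,F]=1$. For $\lambda\in\mathbb{C}$, $V_\lambda$ is the $osc$-module with basis $\{|\lambda,n\rangle: n\ge 0\}$ and action $H|\lambda,n\rangle=(\lambda+2n)|\lambda,n\rangle$, $E|\lambda,n\rangle=|\lambda,n+1\rangle$, $F|\lambda,n\rangle=-n|\lambda,n-1\rangle$. The functions $K_n(k,N)$ (proportional to Krawtchouk polynomials) are $$K_n(k,N)=\binom{N}{n}\,{}_2F_1\!\left(\begin{matrix}-n,\ -k\\ -N\end{matrix}\;\Big|\;p^{-1}\right)=\binom{N}{n}\sum_{j=0}^{\min(n,k)}\frac{(-n)_j(-k)_j}{j!\,(-N)_j}p^{-j},$$ with $(a)_j=a(a+1)\cdots(a+j-1)$. *)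

theory Defs
  imports Complex_Main
begin

definition osc_rel :: "'b::ring_1 \<Rightarrow> 'b \<Rightarrow> 'b \<Rightarrow> bool" where
  "osc_rel H E F \<longleftrightarrow>
     H * E - E * H = 2 * E \<and> H * F - F * H = - 2 * F \<and> E * F - F * E = 1"

definition cplx_alg :: "(complex \<Rightarrow> 'b::ring_1) \<Rightarrow> bool" where
  "cplx_alg emb \<longleftrightarrow> emb 0 = 0 \<and> emb 1 = 1 \<and>
     (\<forall>a b. emb (a + b) = emb a + emb b) \<and> (\<forall>a b. emb (a * b) = emb a * emb b) \<and>
     (\<forall>a x. emb a * x = x * emb a)"

text \<open>Two mutually commuting copies of osc (as in osc \<otimes> osc: X \<otimes> 1 and 1 \<otimes> Y).\<close>
definition commute_all :: "'b::ring_1 list \<Rightarrow> 'b list \<Rightarrow> bool" where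
  "commute_all xs ys \<longleftrightarrow> (\<forall>x\<in>set xs. \<forall>y\<in>set ys. x * y = y * x)"

text \<open>The module V_lambda: vectors are coefficient functions w.r.t. the basis |lambda,n>.\<close>
definition oscH :: "complex \<Rightarrow> (nat \<Rightarrow> complex) \<Rightarrow> nat \<Rightarrow> complex" where
  "oscH lam f n = (lam + 2 * of_nat n) * f n"
definition oscE :: "(nat \<Rightarrow> complex) \<Rightarrow> nat \<Rightarrow> complex" where
  "oscE f n = (if n = 0 then 0 else f (n - 1))"      (* E|n> = |n+1> *)
definition oscF :: "(nat \<Rightarrow> complex) \<Rightarrow> nat \<Rightarrow> complex" where
  "oscF f n = - of_nat (n + 1) * f (n + 1)"          (* F|n> = -n|n-1> *)

text \<open>Tensor product V_l1 \<otimes> V_l2: coefficient functions w.r.t. |l1,n> \<otimes> |l2,m>.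
  T \<otimes> I and I \<otimes> T.\<close>
definition tens_left :: "((nat \<Rightarrow> complex) \<Rightarrow> nat \<Rightarrow> complex) \<Rightarrow> (nat \<times> nat \<Rightarrow> complex) \<Rightarrow> nat \<times> nat \<Rightarrow> complex" where
  "tens_left T v = (\<lambda>(n, m). T (\<lambda>n'. v (n', m)) n)"
definition tens_right :: "((nat \<Rightarrow> complex) \<Rightarrow> nat \<Rightarrow> complex) \<Rightarrow> (nat \<times> nat \<Rightarrow> complex) \<Rightarrow> nat \<times> nat \<Rightarrow> complex" where
  "tens_right T v = (\<lambda>(n, m). T (\<lambda>m'. v (n, m')) m)"

definition DeltaH :: "complex \<Rightarrow> complex \<Rightarrow> (nat \<times> nat \<Rightarrow> complex) \<Rightarrow> nat \<times> nat \<Rightarrow> complex" where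
  "DeltaH l1 l2 v = (\<lambda>x. tens_left (oscH l1) v x + tens_right (oscH l2) v x)"
definition DeltaE :: "(nat \<times> nat \<Rightarrow> complex) \<Rightarrow> nat \<times> nat \<Rightarrow> complex" where
  "DeltaE v = (\<lambda>x. tens_left oscE v x + tens_right oscE v x)"
definition DeltaF :: "complex \<Rightarrow> (nat \<times> nat \<Rightarrow> complex) \<Rightarrow> nat \<times> nat \<Rightarrow> complex" where
  "DeltaF p v = (\<lambda>x. p * tens_left oscF v x + (1 - p) * tens_right oscF v x)"

text \<open>K_n(k,N) = binom(N,n) 2F1(-n,-k;-N;1/p).\<close>
definition Kraw :: "complex \<Rightarrow> nat \<Rightarrow> nat \<Rightarrow> nat \<Rightarrow> complex" where
  "Kraw p n k N = of_nat (N choose n) *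
     (\<Sum>j\<le>min n k. pochhammer (- of_nat n) j * pochhammer (- of_nat k) j
        / (fact j * pochhammer (- of_nat N) j) * inverse p ^ j)"

definition wvec :: "complex \<Rightarrow> nat \<Rightarrow> nat \<Rightarrow> nat \<times> nat \<Rightarrow> complex" where
  "wvec p k N = (\<lambda>(n, m). if n \<le> N \<and> m = N - n then Kraw p n k N else 0)"

end

theory Submission
  imports Defs "HOL-Computational_Algebra.Polynomial"
begin


lemma poch_neg_nat:
  "j \<le> m \<Longrightarrow> pochhammer (- of_nat m :: complex) j * fact (m - j) = (-1)^j * fact m"
proof (induction j)
  case 0 then show ?case by simp
next
  case (Suc j)
  then have IH: "pochhammer (- of_nat m :: complex) j * fact (m - j) = (-1)^j * fact m" by simp
  have f: "(fact (m - j) :: complex) = of_nat (m - j) * fact (m - Suc j)"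
    using Suc.prems by (metis Suc_diff_Suc Suc_le_lessD fact_Suc of_nat_fact of_nat_mult)
  have "pochhammer (- of_nat m :: complex) (Suc j) * fact (m - Suc j)
      = (- of_nat m + of_nat j) * pochhammer (- of_nat m) j * fact (m - Suc j)"
    by (simp add: pochhammer_rec')
  also have "(- of_nat m + of_nat j :: complex) = - of_nat (m - j)"
    using Suc.prems by (simp add: of_nat_diff)
  also have "- of_nat (m - j) * pochhammer (- of_nat m) j * fact (m - Suc j)
     = - (pochhammer (- of_nat m :: complex) j * fact (m - j))" by (simp add: f)
  finally show ?case using IH by simp
qed

lemma poch_neg_nat': "j \<le> m \<Longrightarrow> pochhammer (- of_nat m :: complex) j = (-1)^j * fact m / fact (m - j)"
  using poch_neg_nat[of j m] by (simp add: field_simps)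

lemma alg:
  fixes fN fn fNn fnj fk fkj fj fNj s q :: complex
  assumes "fN \<noteq> 0" "fn \<noteq> 0" "fNn \<noteq> 0" "fnj \<noteq> 0" "fk \<noteq> 0" "fkj \<noteq> 0" "fj \<noteq> 0" "fNj \<noteq> 0" "s * s = 1"
  shows "fN / (fn * fNn) * (s * fn / fnj * (s * fk / fkj) / (fj * (s * fN / fNj)) * q)
       = fk / (fj * fkj) * (fNj / (fnj * fNn)) * (s * q)"
proof -
  have "s \<noteq> 0" using assms(9) by auto
  then show ?thesis using assms by (simp add: field_simps)
qed

lemma Kraw_alt:
  assumes "n \<le> N"
  shows "Kraw p n k N = (\<Sum>j\<le>min n k. of_nat (k choose j) * of_nat ((N - j) choose (n - j)) * (- inverse p) ^ j)"
  unfolding Kraw_def sum_distrib_left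
proof (rule sum.cong[OF refl])
  fix j assume "j \<in> {..min n k}"
  then have jn: "j \<le> n" and jk: "j \<le> k" by auto
  have jN: "j \<le> N" using jn assms by simp
  have b1: "(of_nat (N choose n) :: complex) = fact N / (fact n * fact (N - n))" using assms by (rule binomial_fact)
  have b2: "(of_nat (k choose j) :: complex) = fact k / (fact j * fact (k - j))" using jk by (rule binomial_fact)
  have b3: "(of_nat ((N - j) choose (n - j)) :: complex) = fact (N - j) / (fact (n - j) * fact (N - n))"
  proof -
    have e: "N - j - (n - j) = N - n" using assms jn by simp
    have "n - j \<le> N - j" using assms by simp
    from binomial_fact[OF this, where 'a=complex] show ?thesis unfolding e .
  qed
  have pe: "pochhammer (- of_nat n) j * pochhammer (- of_nat k) j / (fact j * pochhammer (- of_nat N) j) * inverse p ^ j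
     = ((-1)^j * fact n / fact (n - j)) * ((-1)^j * fact k / fact (k - j)) / (fact j * ((-1)^j * fact N / fact (N - j))) * inverse p ^ j"
    by (simp add: poch_neg_nat' jn jk jN)
  show "of_nat (N choose n) * (pochhammer (- of_nat n) j * pochhammer (- of_nat k) j / (fact j * pochhammer (- of_nat N) j) * inverse p ^ j) =
         of_nat (k choose j) * of_nat (N - j choose (n - j)) * (- inverse p) ^ j"
    unfolding b1 b2 b3 power_minus[of "inverse p"] pe
    by (rule alg) (auto simp flip: power_mult_distrib)
qed



lemma coeff_u_pow: "coeff ([:1,1:]^m :: complex poly) i = of_nat (m choose i)"
proof (cases "i \<le> m")
  case True then show ?thesis by (simp add: coeff_linear_poly_power)
next
  case False
  have "degree ([:1,1:]^m :: complex poly) \<le> m"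
    using degree_power_le[of "[:1,1:] :: complex poly" m] by simp
  then show ?thesis using False by (simp add: coeff_eq_0)
qed

definition Gp :: "complex \<Rightarrow> nat \<Rightarrow> nat \<Rightarrow> complex poly" where
  "Gp p k N = [:1,1:]^(N - k) * [:1, 1 - inverse p:]^k"

lemma coeff_Gp:
  assumes "k \<le> N"
  shows "coeff (Gp p k N) n = (\<Sum>j\<le>min n k. of_nat (k choose j) * of_nat ((N - j) choose (n - j)) * (- inverse p) ^ j)"
proof -
  let ?r = "- inverse p"
  let ?u = "[:1,1:] :: complex poly"
  have v: "[:1, 1 - inverse p:] = monom ?r 1 + ?u" by (simp add: monom_Suc monom_0)
  have "Gp p k N = ?u^(N-k) * (\<Sum>j\<le>k. of_nat (k choose j) * monom ?r 1 ^ j * ?u ^ (k - j))"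
    unfolding Gp_def v binomial_ring ..
  also have "\<dots> = (\<Sum>j\<le>k. smult (of_nat (k choose j)) (monom (?r ^ j) j * ?u ^ (N - j)))"
    unfolding sum_distrib_left
  proof (rule sum.cong[OF refl])
    fix j assume "j \<in> {..k}"
    then have "N - j = (N - k) + (k - j)" using assms by auto
    then have "?u ^ (N - j) = ?u^(N-k) * ?u^(k-j)" by (simp add: power_add)
    then show "?u^(N-k) * (of_nat (k choose j) * monom ?r 1 ^ j * ?u ^ (k - j)) =
      smult (of_nat (k choose j)) (monom (?r ^ j) j * ?u ^ (N - j))"
      by (simp add: monom_power of_nat_poly algebra_simps)
  qed
  finally have "coeff (Gp p k N) n = (\<Sum>j\<le>k. of_nat (k choose j) * (if n < j then 0 else ?r ^ j * of_nat ((N - j) choose (n - j))))"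
    by (simp add: coeff_sum coeff_monom_mult, simp only: coeff_u_pow)
  also have "\<dots> = (\<Sum>j\<in>{..min n k}. of_nat (k choose j) * of_nat ((N - j) choose (n - j)) * ?r ^ j)"
    by (rule sum.mono_neutral_cong_right) auto
  finally show ?thesis .
qed



lemma wvec_Gp:
  assumes "k \<le> N"
  shows "wvec p k N (n, m) = (if n + m = N then coeff (Gp p k N) n else 0)"
  using assms by (auto simp: wvec_def Kraw_alt coeff_Gp)

lemma Gp_Suc: "k \<le> N \<Longrightarrow> Gp p k (Suc N) = [:1,1:] * Gp p k N"
  by (simp add: Gp_def Suc_diff_le algebra_simps)

lemma coeff_u_mult: "coeff ([:1,1:] * (q :: complex poly)) n = coeff q n + (if n = 0 then 0 else coeff q (n - 1))"
  by (cases n) (simp_all add: coeff_pCons)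

lemma scalar_id0:
  fixes c p a k :: complex
  assumes "p * c = p - 1"
  shows "[:p, p - 1:] * (smult (k * c) [:1,1:] + smult a [:1, c:])
     + smult ((1 - p) * (a + k)) ([:1,1:] * [:1, c:]) = smult a [:1, c:]"
proof -
  have "\<And>x. poly ([:p, p - 1:] * (smult (k * c) [:1,1:] + smult a [:1, c:])
     + smult ((1 - p) * (a + k)) ([:1,1:] * [:1, c:])) x = poly (smult a [:1, c:]) x"
    using assms unfolding poly_add poly_mult poly_smult poly_pCons poly_0 by algebra
  then show ?thesis using poly_eq_poly_eq_iff by blast
qed

lemma lin_eq: "smult p 1 - smult (1 - p) [:0,1:] = [:p::complex, p - 1:]"
proof -
  have "\<And>x. poly (smult p 1 - smult (1 - p) [:0,1:]) x = poly [:p::complex, p - 1:] x"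
    unfolding poly_diff poly_smult poly_pCons poly_0 poly_1 by algebra
  then show ?thesis using poly_eq_poly_eq_iff by blast
qed



lemma mult_pderiv_power: "q * pderiv (q ^ n) = smult (of_nat n) (q ^ n * pderiv (q :: complex poly))"
proof (cases n)
  case (Suc m)
  have "q * pderiv (q ^ Suc m) = q * (smult (of_nat (Suc m)) (q ^ m) * pderiv q)"
    by (simp only: pderiv_power_Suc)
  also have "\<dots> = smult (of_nat (Suc m)) (q ^ Suc m * pderiv q)"
    by (simp add: algebra_simps)
  finally show ?thesis using Suc by simp
qed simp

lemma L_identity:
  assumes p: "p \<noteq> 0" and kN: "k \<le> N"
  defines "G \<equiv> Gp p k N"
  shows "smult p (pderiv G) + smult (1 - p) (smult (of_nat N) G - [:0,1:] * pderiv G)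
         = (if k < N then smult (of_nat (N - k)) (Gp p k (N - 1)) else 0)"
proof -
  define c where "c = 1 - inverse p"
  define u where "u = ([:1,1:] :: complex poly)"
  define v where "v = [:1, c:]"
  define a where "a = N - k"
  have G: "G = u ^ a * v ^ k" by (simp add: G_def Gp_def u_def v_def c_def a_def)
  have pc: "p * c = p - 1" using p by (simp add: c_def field_simps)
  have du: "pderiv u = 1" by (simp add: u_def pderiv_pCons)
  have dv: "pderiv v = [:c:]" by (simp add: v_def pderiv_pCons)
  have uvD: "u * v * pderiv G = (smult (of_nat k * c) u + smult (of_nat a) v) * G"
  proof -
    have "u * v * pderiv G = u * u ^ a * (v * pderiv (v ^ k)) + v * v ^ k * (u * pderiv (u ^ a))"
      by (simp add: G pderiv_mult algebra_simps)
    also have "\<dots> = u * u ^ a * smult (of_nat k) (v ^ k * [:c:]) + v * v ^ k * smult (of_nat a) (u ^ a)"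
      by (simp add: mult_pderiv_power du dv)
    also have "\<dots> = (smult (of_nat k * c) u + smult (of_nat a) v) * G"
      by (simp add: G algebra_simps)
    finally show ?thesis .
  qed
  define x where "x = ([:0,1:] :: complex poly)"
  define L where "L = smult p (pderiv G) + smult (1 - p) (smult (of_nat N) G - x * pderiv G)"
  have Nak: "(of_nat N :: complex) = of_nat a + of_nat k" using kN by (simp add: a_def)
  define w where "w = [:p, p - 1:]"
  have lin': "smult p 1 - smult (1 - p) x = w" unfolding x_def w_def by (rule lin_eq)
  have si: "w * (smult (of_nat k * c) u + smult (of_nat a) v) + smult ((1 - p) * (of_nat a + of_nat k)) (u * v) = smult (of_nat a) v"
    unfolding w_def u_def v_def by (rule scalar_id0[OF pc])
  have "u * v * L = (smult p 1 - smult (1 - p) x) * (u * v * pderiv G) + smult ((1 - p) * of_nat N) (u * v) * G"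
    unfolding L_def by (simp add: algebra_simps smult_diff_right smult_diff_left smult_add_right)
  also have "\<dots> = (w * (smult (of_nat k * c) u + smult (of_nat a) v) + smult ((1 - p) * (of_nat a + of_nat k)) (u * v)) * G"
    unfolding lin' uvD Nak by (simp add: algebra_simps)
  also have "\<dots> = smult (of_nat a) v * G"
    by (simp only: si)
  finally have "v * (u * L) = v * smult (of_nat a) G" by (simp add: algebra_simps)
  moreover have "v \<noteq> 0" by (simp add: v_def)
  ultimately have uL: "u * L = smult (of_nat a) G" by (metis mult_left_cancel mult_smult_right)
  show ?thesis
  proof (cases "k < N")
    case True
    then obtain b where b: "a = Suc b" using a_def by (metis Suc_diff_Suc)
    have "N - 1 - k = b" using b a_def by simp
    then have "Gp p k (N - 1) = u ^ b * v ^ k"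
      by (simp add: Gp_def u_def v_def c_def a_def)
    then have "u * smult (of_nat a) (Gp p k (N - 1)) = smult (of_nat a) G"
      by (simp add: G b algebra_simps)
    with uL have "u * L = u * smult (of_nat a) (Gp p k (N - 1))" by simp
    moreover have "u \<noteq> 0" by (simp add: u_def)
    ultimately have "L = smult (of_nat a) (Gp p k (N - 1))" by (metis mult_left_cancel mult_smult_right)
    then show ?thesis using True by (simp add: L_def a_def x_def)
  next
    case False
    then have "a = 0" using kN by (simp add: a_def)
    with uL have "u * L = 0" by simp
    moreover have "u \<noteq> 0" by (simp add: u_def)
    ultimately show ?thesis using False by (simp add: L_def x_def)
  qed
qed

lemma coeffF:
  assumes p: "p \<noteq> 0" and kN: "k \<le> N" and nN: "n \<le> N"
  shows "p * (of_nat (n + 1) * coeff (Gp p k N) (n + 1)) + (1 - p) * (of_nat (N - n) * coeff (Gp p k N) n)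
     = (if k < N then of_nat (N - k) * coeff (Gp p k (N - 1)) n else 0)"
proof -
  have "coeff (smult p (pderiv (Gp p k N)) + smult (1 - p) (smult (of_nat N) (Gp p k N) - [:0,1:] * pderiv (Gp p k N))) n
     = p * (of_nat (n + 1) * coeff (Gp p k N) (n + 1)) + (1 - p) * (of_nat (N - n) * coeff (Gp p k N) n)"
  proof -
    have c1: "coeff ([:0,1:] * pderiv (Gp p k N)) n = of_nat n * coeff (Gp p k N) n"
      by (cases n) (simp_all add: coeff_pderiv coeff_pCons)
    have "coeff (smult p (pderiv (Gp p k N)) + smult (1 - p) (smult (of_nat N) (Gp p k N) - [:0,1:] * pderiv (Gp p k N))) n
      = p * (of_nat (n + 1) * coeff (Gp p k N) (n + 1)) + (1 - p) * (of_nat N * coeff (Gp p k N) n - of_nat n * coeff (Gp p k N) n)"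
      by (simp only: coeff_add coeff_smult coeff_diff c1 coeff_pderiv) simp
    also have "\<dots> = p * (of_nat (n + 1) * coeff (Gp p k N) (n + 1)) + (1 - p) * (of_nat (N - n) * coeff (Gp p k N) n)"
      using nN by (simp add: of_nat_diff algebra_simps)
    finally show ?thesis .
  qed
  then show ?thesis unfolding L_identity[OF p kN] by (simp split: if_splits)
qed



definition br :: "'b::ring_1 \<Rightarrow> 'b \<Rightarrow> 'b" where "br x y = x * y - y * x"

lemma br_add_left: "br (a + b) c = br a c + br b c" by (simp add: br_def algebra_simps)
lemma br_add_right: "br a (b + c) = br a b + br a c" by (simp add: br_def algebra_simps)
lemma br_scal_right: "a * P = P * a \<Longrightarrow> br a (P * b) = P * br a b"
  by (simp add: br_def algebra_simps) (metis mult.assoc)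
lemma br_scal_left: "b * P = P * b \<Longrightarrow> br (P * a) b = P * br a b"
  by (simp add: br_def algebra_simps) (metis mult.assoc)
lemma br_comm: "a * b = b * a \<Longrightarrow> br a b = 0" by (simp add: br_def)

lemma part1:
  fixes emb :: "complex \<Rightarrow> 'b::ring_1"
  assumes ca: "cplx_alg emb" and r1: "osc_rel H1 E1 F1" and r2: "osc_rel H2 E2 F2"
    and cm: "commute_all [H1, E1, F1] [H2, E2, F2]"
  shows "osc_rel (H1 + H2) (E1 + E2) (emb p * F1 + emb (1 - p) * F2)"
proof -
  have ec: "\<And>a x. x * emb a = emb a * x" using ca unfolding cplx_alg_def by metis
  have sum1: "emb p + emb (1 - p) = 1"
  proof -
    have add: "emb (p + (1 - p)) = emb p + emb (1 - p)" using ca unfolding cplx_alg_def by blast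
    have one: "emb 1 = 1" using ca unfolding cplx_alg_def by blast
    have "p + (1 - p) = 1" by simp
    with add one show ?thesis by simp
  qed
  have c: "H1 * E2 = E2 * H1" "H1 * F2 = F2 * H1" "E1 * H2 = H2 * E1" "E1 * F2 = F2 * E1"
          "F1 * H2 = H2 * F1" "F1 * E2 = E2 * F1"
    using cm unfolding commute_all_def by auto
  have b1: "br H1 E1 = 2 * E1" "br H1 F1 = - 2 * F1" "br E1 F1 = 1"
    using r1 unfolding osc_rel_def br_def by auto
  have b2: "br H2 E2 = 2 * E2" "br H2 F2 = - 2 * F2" "br E2 F2 = 1"
    using r2 unfolding osc_rel_def br_def by auto
  have ecs: "H1 * emb p = emb p * H1" "H2 * emb p = emb p * H2" "E1 * emb p = emb p * E1" "E2 * emb p = emb p * E2"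
     "H1 * emb (1 - p) = emb (1 - p) * H1" "H2 * emb (1 - p) = emb (1 - p) * H2"
     "E1 * emb (1 - p) = emb (1 - p) * E1" "E2 * emb (1 - p) = emb (1 - p) * E2"
     "- 2 * emb p = emb p * - 2" "- 2 * emb (1 - p) = emb (1 - p) * - 2"
    by (rule ec)+
  have z: "br H1 E2 = 0" "br H2 E1 = 0" "br H1 F2 = 0" "br H2 F1 = 0" "br E1 F2 = 0" "br E2 F1 = 0"
    using c by (auto intro: br_comm)
  have "br (H1 + H2) (E1 + E2) = 2 * (E1 + E2)"
    by (simp add: br_add_left br_add_right b1 b2 z distrib_left)
  moreover have "br (H1 + H2) (emb p * F1 + emb (1 - p) * F2) = - 2 * (emb p * F1 + emb (1 - p) * F2)"
  proof -
    have "br (H1 + H2) (emb p * F1 + emb (1 - p) * F2) = emb p * (-2 * F1) + emb (1 - p) * (-2 * F2)"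
      by (simp add: br_add_left br_add_right br_scal_right ecs b1 b2 z)
    also have "\<dots> = - 2 * (emb p * F1 + emb (1 - p) * F2)"
      by (simp only: distrib_left mult.assoc[symmetric] ecs(9,10))
    finally show ?thesis .
  qed
  moreover have "br (E1 + E2) (emb p * F1 + emb (1 - p) * F2) = 1"
    by (simp add: br_add_left br_add_right br_scal_right ecs b1 b2 z sum1)
  ultimately show ?thesis unfolding osc_rel_def br_def by simp
qed

lemma coeff_Gp_high: "k \<le> N \<Longrightarrow> coeff (Gp p k N) (Suc N) = 0"
  by (simp add: coeff_Gp, rule sum.neutral, auto simp: Suc_diff_le)

lemma partH: "k \<le> N \<Longrightarrow> DeltaH l1 l2 (wvec p k N) = (\<lambda>x. (l1 + l2 + 2 * of_nat N) * wvec p k N x)"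
proof (rule ext, clarify)
  fix n m assume kN: "k \<le> N"
  show "DeltaH l1 l2 (wvec p k N) (n, m) = (l1 + l2 + 2 * of_nat N) * wvec p k N (n, m)"
  proof (cases "n + m = N")
    case True
    then have "(of_nat N :: complex) = of_nat n + of_nat m" by (metis of_nat_add)
    then show ?thesis unfolding DeltaH_def tens_left_def tens_right_def oscH_def
      by (simp add: algebra_simps)
  next
    case False
    then show ?thesis unfolding DeltaH_def tens_left_def tens_right_def oscH_def
      using kN by (simp add: wvec_Gp)
  qed
qed

lemma partE: "k \<le> N \<Longrightarrow> DeltaE (wvec p k N) = wvec p k (N + 1)"
proof (rule ext, clarify)
  fix n m assume kN: "k \<le> N"
  have kN1: "k \<le> N + 1" using kN by simp
  show "DeltaE (wvec p k N) (n, m) = wvec p k (N + 1) (n, m)"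
    unfolding DeltaE_def tens_left_def tens_right_def oscE_def wvec_Gp[OF kN] wvec_Gp[OF kN1]
    using kN by (cases n; cases m) (auto simp: Gp_Suc coeff_u_mult coeff_Gp_high)
qed

lemma partF:
  assumes p: "p \<noteq> 0" and kN: "k \<le> N"
  shows "DeltaF p (wvec p k N) = (if k < N then (\<lambda>x. - of_nat (N - k) * wvec p k (N - 1) x) else (\<lambda>x. 0))"
proof (rule ext, clarify)
  fix n m
  have L: "DeltaF p (wvec p k N) (n, m) =
     - (p * (of_nat (n + 1) * (if n + 1 + m = N then coeff (Gp p k N) (n + 1) else 0))
      + (1 - p) * (of_nat (m + 1) * (if n + (m + 1) = N then coeff (Gp p k N) n else 0)))"
    unfolding DeltaF_def tens_left_def tens_right_def oscF_def
    by (simp add: wvec_Gp[OF kN] algebra_simps)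
  show "DeltaF p (wvec p k N) (n, m) = (if k < N then (\<lambda>x. - of_nat (N - k) * wvec p k (N - 1) x) else (\<lambda>x. 0)) (n, m)"
  proof (cases "n + m + 1 = N")
    case True
    then have nN: "n \<le> N" and e: "m + 1 = N - n" by auto
    have "DeltaF p (wvec p k N) (n, m) = - (p * (of_nat (n + 1) * coeff (Gp p k N) (n + 1)) + (1 - p) * (of_nat (N - n) * coeff (Gp p k N) n))"
      unfolding L using True e by simp
    also have "\<dots> = - (if k < N then of_nat (N - k) * coeff (Gp p k (N - 1)) n else 0)"
      using coeffF[OF p kN nN] by simp
    finally show ?thesis
      using True by (auto simp: wvec_Gp algebra_simps)
  next
    case False
    have "DeltaF p (wvec p k N) (n, m) = 0" unfolding L using False by simp
    then show ?thesis using False by (auto simp: wvec_Gp)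
  qed
qed


theorem mainTheorem2:
  fixes p :: complex
  assumes "p \<noteq> 0"
  shows "(\<forall>(emb :: complex \<Rightarrow> 'b::ring_1) H1 E1 F1 H2 E2 F2.
            cplx_alg emb \<and> osc_rel H1 E1 F1 \<and> osc_rel H2 E2 F2 \<and>
            commute_all [H1, E1, F1] [H2, E2, F2] \<longrightarrow>
            osc_rel (H1 + H2) (E1 + E2) (emb p * F1 + emb (1 - p) * F2))
    \<and> (\<forall>l1 l2 :: complex. \<forall>k N :: nat. k \<le> N \<longrightarrow>
          DeltaH l1 l2 (wvec p k N) = (\<lambda>x. (l1 + l2 + 2 * of_nat N) * wvec p k N x)
        \<and> DeltaE (wvec p k N) = wvec p k (N + 1)
        \<and> DeltaF p (wvec p k N) =
            (if k < N then (\<lambda>x. - of_nat (N - k) * wvec p k (N - 1) x) else (\<lambda>x. 0)))"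
proof (intro conjI allI impI)
  fix emb :: "complex \<Rightarrow> 'b::ring_1" and H1 E1 F1 H2 E2 F2 :: 'b
  assume h: "cplx_alg emb \<and> osc_rel H1 E1 F1 \<and> osc_rel H2 E2 F2 \<and> commute_all [H1, E1, F1] [H2, E2, F2]"
  then show "osc_rel (H1 + H2) (E1 + E2) (emb p * F1 + emb (1 - p) * F2)"
    using part1[of emb H1 E1 F1 H2 E2 F2 p] by blast
next
  fix l1 l2 :: complex and k N :: nat assume kN: "k \<le> N"
  show "DeltaH l1 l2 (wvec p k N) = (\<lambda>x. (l1 + l2 + 2 * of_nat N) * wvec p k N x)"
    by (rule partH[OF kN])
  show "DeltaE (wvec p k N) = wvec p k (N + 1)"
    by (rule partE[OF kN])
  show "DeltaF p (wvec p k N) = (if k < N then (\<lambda>x. - of_nat (N - k) * wvec p k (N - 1) x) else (\<lambda>x. 0))"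
    by (rule partF[OF assms kN])
qed

end
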